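(* Let $\Sigma=\{\sigma_{\mathbf{a}|\mathbf{x}}\}$ be a no-signaling assemblage of operators acting on $\mathbb{C}^d$. If there exists a local deterministic box $L$ such that $\sum_{\mathbf{a}|\mathbf{x}\in I_L}\mathrm{rank}(\sigma_{\mathbf{a}|\mathbf{x}})>(|I_L|-1)d$, then $\Sigma$ is not on the edge of the set of no-signaling assemblages.
   Context: Fix $n\ge 1$, integers $\mathcal{A}_i,\mathcal{X}_i\ge 1$ and $d\ge1$; write $\mathbf{a}|\mathbf{x}=a_1\dots a_n|x_1\dots x_n$ with $a_i\in\{0,\dots,\mathcal{A}_i-1\}$, $x_i\in\{0,\dots,\mathcal{X}_i-1\}$. A no-signaling assemblage is a collection of positive semidefinite operators $\sigma_{\mathbf{a}|\mathbf{x}}$ on $\mathbb{C}^d$ with $\sum_{\mathbf{a}}\sigma_{\mathbf{a}|\mathbf{x}}=\rho_B$ for all $\mathbf{x}$ ($\rho_B$ a fixed density operator) and such that for every $I=\{i_1,\dots,i_s\}\subset\{1,\dots,n\}$, $1\le s<n$, the sum $\sum_{a_j:\,j\notin I}\sigma_{\mathbf{a}|\mathbf{x}}$ depends only on $a_{i_k},x_{i_k}$. A local deterministic box $L$ is given by functions $f_i:\{0,\dots,\mathcal{X}_i-1\}\to\{0,\dots,\mathcal{A}_i-1\}$ via $p_L(\mathbf{a}|\mathbf{x})=\prod_i\delta_{a_i,f_i(x_i)}$; $I_L=\{\mathbf{a}|\mathbf{x}:p_L(\mathbf{a}|\mathbf{x})\ne0\}$ (so $|I_L|=\prod_i\mathcal{X}_i$).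 An LHS assemblage is one of the form $\sigma_{\mathbf{a}|\mathbf{x}}=\sum_j q_j\prod_i p^{(A_i)}_j(a_i|x_i)\rho_j$ with probability weights $q_j$, density operators $\rho_j$ and conditional distributions $p^{(A_i)}_j$. $\Sigma$ is on the edge if any decomposition $\Sigma=\epsilon\Sigma_1+(1-\epsilon)\Sigma_2$ with $\epsilon\in[0,1]$, $\Sigma_1$ LHS and $\Sigma_2$ no-signaling forces $\epsilon=0$. *)

theory Defs
  imports "HOL-Analysis.Analysis"
begin

type_synonym 'd cmat = "complex^'d^'d"

definition psd :: "'d::finite cmat \<Rightarrow> bool" where
  "psd M \<longleftrightarrow> (\<forall>v::complex^'d.
     let q = (\<Sum>i\<in>UNIV. cnj (v $ i) * (M *v v) $ i) in Im q = 0 \<and> Re q \<ge> 0)"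

definition density :: "'d::finite cmat \<Rightarrow> bool" where
  "density M \<longleftrightarrow> psd M \<and> trace M = 1"

definition cfg :: "nat \<Rightarrow> (nat \<Rightarrow> nat) \<Rightarrow> (nat \<Rightarrow> nat) set" where
  "cfg n B = {c. (\<forall>i<n. c i < B i) \<and> (\<forall>i\<ge>n. c i = 0)}"

type_synonym 'd assemblage = "(nat \<Rightarrow> nat) \<Rightarrow> (nat \<Rightarrow> nat) \<Rightarrow> 'd cmat"

definition marginal :: "nat \<Rightarrow> (nat \<Rightarrow> nat) \<Rightarrow> 'd::finite assemblage \<Rightarrow> nat set
     \<Rightarrow> (nat \<Rightarrow> nat) \<Rightarrow> (nat \<Rightarrow> nat) \<Rightarrow> 'd cmat" where
  "marginal n A \<sigma> I a x = (\<Sum>b\<in>{b\<in>cfg n A. \<forall>i\<in>I. b i = a i}. \<sigma> b x)"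

definition no_signaling ::
  "nat \<Rightarrow> (nat \<Rightarrow> nat) \<Rightarrow> (nat \<Rightarrow> nat) \<Rightarrow> 'd::finite assemblage \<Rightarrow> bool" where
  "no_signaling n A X \<sigma> \<longleftrightarrow>
     (\<forall>a\<in>cfg n A. \<forall>x\<in>cfg n X. psd (\<sigma> a x)) \<and>
     (\<exists>\<rho>. density \<rho> \<and> (\<forall>x\<in>cfg n X. (\<Sum>a\<in>cfg n A. \<sigma> a x) = \<rho>)) \<and>
     (\<forall>I. I \<subseteq> {0..<n} \<and> 1 \<le> card I \<and> card I < n \<longrightarrow>
        (\<forall>a\<in>cfg n A. \<forall>a'\<in>cfg n A. \<forall>x\<in>cfg n X. \<forall>x'\<in>cfg n X.
           (\<forall>i\<in>I. a i = a' i \<and> x i = x' i) \<longrightarrow>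
           marginal n A \<sigma> I a x = marginal n A \<sigma> I a' x'))"

text \<open>LHS assemblage: finite mixture sum_j q_j prod_i p_j^(i)(a_i|x_i) rho_j.
  p j i a x is the conditional probability p_j^(A_i)(a|x).\<close>
definition LHS ::
  "nat \<Rightarrow> (nat \<Rightarrow> nat) \<Rightarrow> (nat \<Rightarrow> nat) \<Rightarrow> 'd::finite assemblage \<Rightarrow> bool" where
  "LHS n A X \<sigma> \<longleftrightarrow>
     (\<exists>(m::nat) (q::nat \<Rightarrow> real) (\<rho>::nat \<Rightarrow> 'd cmat) (p::nat \<Rightarrow> nat \<Rightarrow> nat \<Rightarrow> nat \<Rightarrow> real).
        (\<forall>j<m. q j \<ge> 0) \<and> (\<Sum>j<m. q j) = 1 \<and>
        (\<forall>j<m. density (\<rho> j)) \<and>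
        (\<forall>j<m. \<forall>i<n. \<forall>x<X i. (\<forall>a<A i. p j i a x \<ge> 0) \<and> (\<Sum>a<A i. p j i a x) = 1) \<and>
        (\<forall>a\<in>cfg n A. \<forall>x\<in>cfg n X.
           \<sigma> a x = (\<Sum>j<m. (q j * (\<Prod>i<n. p j i (a i) (x i))) *\<^sub>R \<rho> j)))"

definition on_edge ::
  "nat \<Rightarrow> (nat \<Rightarrow> nat) \<Rightarrow> (nat \<Rightarrow> nat) \<Rightarrow> 'd::finite assemblage \<Rightarrow> bool" where
  "on_edge n A X \<sigma> \<longleftrightarrow>
     (\<forall>(\<epsilon>::real) \<sigma>1 \<sigma>2. 0 \<le> \<epsilon> \<and> \<epsilon> \<le> 1 \<and> LHS n A X \<sigma>1 \<and> no_signaling n A X \<sigma>2 \<and>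
        (\<forall>a\<in>cfg n A. \<forall>x\<in>cfg n X. \<sigma> a x = \<epsilon> *\<^sub>R \<sigma>1 a x + (1 - \<epsilon>) *\<^sub>R \<sigma>2 a x)
        \<longrightarrow> \<epsilon> = 0)"

definition det_box :: "nat \<Rightarrow> (nat \<Rightarrow> nat) \<Rightarrow> (nat \<Rightarrow> nat) \<Rightarrow> (nat \<Rightarrow> nat \<Rightarrow> nat) \<Rightarrow> bool" where
  "det_box n A X f \<longleftrightarrow> (\<forall>i<n. \<forall>x<X i. f i x < A i)"

definition p_L :: "nat \<Rightarrow> (nat \<Rightarrow> nat \<Rightarrow> nat) \<Rightarrow> (nat \<Rightarrow> nat) \<Rightarrow> (nat \<Rightarrow> nat) \<Rightarrow> real" where
  "p_L n f a x = (\<Prod>i<n. if a i = f i (x i) then 1 else 0)"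

definition I_L :: "nat \<Rightarrow> (nat \<Rightarrow> nat) \<Rightarrow> (nat \<Rightarrow> nat) \<Rightarrow> (nat \<Rightarrow> nat \<Rightarrow> nat)
     \<Rightarrow> ((nat \<Rightarrow> nat) \<times> (nat \<Rightarrow> nat)) set" where
  "I_L n A X f = {(a, x). a \<in> cfg n A \<and> x \<in> cfg n X \<and> p_L n f a x \<noteq> 0}"

end

theory Submission
  imports Defs
begin


definition qf :: "'d::finite cmat \<Rightarrow> complex^'d \<Rightarrow> complex^'d \<Rightarrow> complex" where
  "qf M y z = (\<Sum>i\<in>UNIV. cnj (y$i) * (M *v z)$i)"

lemma psd_qf: "psd M \<longleftrightarrow> (\<forall>v. Im (qf M v v) = 0 \<and> Re (qf M v v) \<ge> 0)"
  by (simp add: psd_def qf_def Let_def)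

lemma qf_add_left: "qf M (y1 + y2) z = qf M y1 z + qf M y2 z"
  by (simp add: qf_def sum.distrib algebra_simps)
lemma qf_add_right: "qf M y (z1 + z2) = qf M y z1 + qf M y z2"
  by (simp add: qf_def sum.distrib algebra_simps matrix_vector_mult_def)
lemma qf_diff_left: "qf M (y1 - y2) z = qf M y1 z - qf M y2 z"
  by (simp add: qf_def sum_subtractf algebra_simps)
lemma qf_diff_right: "qf M y (z1 - z2) = qf M y z1 - qf M y z2"
  by (simp add: qf_def sum_subtractf algebra_simps matrix_vector_mult_def)
lemma qf_scale_left: "qf M (c *s y) z = cnj c * qf M y z"
  by (simp add: qf_def sum_distrib_left algebra_simps)
lemma qf_scale_right: "qf M y (c *s z) = c * qf M y z"
  by (simp add: qf_def sum_distrib_left algebra_simps matrix_vector_mult_def)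
lemma qf_madd: "qf (M1 + M2) y z = qf M1 y z + qf M2 y z"
  by (simp add: qf_def sum.distrib algebra_simps matrix_vector_mult_def)
lemma qf_mdiff: "qf (M1 - M2) y z = qf M1 y z - qf M2 y z"
  by (simp add: qf_def sum_subtractf algebra_simps matrix_vector_mult_def)
lemma qf_mscale: "qf (c *\<^sub>R M) y z = of_real c * qf M y z"
  by (simp add: qf_def sum_distrib_left algebra_simps matrix_vector_mult_def scaleR_conv_of_real[where 'a=complex])
lemma qf_mzero[simp]: "qf 0 y z = 0"
  by (simp add: qf_def)
lemma qf_msum: "finite S \<Longrightarrow> qf (\<Sum>a\<in>S. M a) y z = (\<Sum>a\<in>S. qf (M a) y z)"
  by (induction S rule: finite_induct) (simp_all add: qf_madd)



lemma psd_herm: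
  assumes "psd M" shows "qf M z y = cnj (qf M y z)"
proof -
  have P: "\<And>v. Im (qf M v v) = 0" using assms by (simp add: psd_qf)
  have h1: "Im (qf M (y+z) (y+z)) = 0" by (rule P)
  have h2: "Im (qf M (y + \<i> *s z) (y + \<i> *s z)) = 0" by (rule P)
  from h1 P[of y] P[of z] have e1: "Im (qf M y z) + Im (qf M z y) = 0"
    by (simp add: qf_add_left qf_add_right)
  from h2 P[of y] P[of z] have e2: "Re (qf M y z) - Re (qf M z y) = 0"
    by (simp add: qf_add_left qf_add_right qf_scale_left qf_scale_right algebra_simps)
  show ?thesis using e1 e2 by (simp add: complex_eq_iff)
qed

lemma psd_real: "psd M \<Longrightarrow> qf M v v = of_real (Re (qf M v v))"
  by (simp add: psd_qf complex_eq_iff)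

lemma psd_CS:
  assumes "psd M"
  shows "(cmod (qf M u w))^2 \<le> Re (qf M u u) * Re (qf M w w)"
proof -
  define \<alpha> where "\<alpha> = qf M u w"
  define A where "A = Re (qf M u u)"
  define C where "C = Re (qf M w w)"
  define N where "N = (cmod \<alpha>)^2"
  have A0: "A \<ge> 0" and C0: "C \<ge> 0" using assms by (auto simp: psd_qf A_def C_def)
  have N0: "N \<ge> 0" by (simp add: N_def)
  have NN: "N = (Re \<alpha>)^2 + (Im \<alpha>)^2" by (simp add: N_def cmod_power2)
  have key: "0 \<le> A - 2*t*N + t^2*N*C" for t :: real
  proof -
    define s where "s = of_real t * cnj \<alpha>"
    have "0 \<le> Re (qf M (u - s *s w) (u - s *s w))" using assms by (simp add: psd_qf)
    also have "qf M (u - s *s w) (u - s *s w) = qf M u u - s * \<alpha> - cnj s * cnj \<alpha> + cnj s * s * qf M w w"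
      using psd_herm[OF assms, of w u]
      by (simp add: qf_diff_left qf_diff_right qf_scale_left qf_scale_right \<alpha>_def algebra_simps)
    also have "Re \<dots> = A - 2*t*N + t^2*N*C"
      using psd_real[OF assms, of u] psd_real[OF assms, of w]
      by (simp add: s_def A_def C_def NN power2_eq_square algebra_simps)
    finally show ?thesis .
  qed
  have "N \<le> A * C"
  proof (cases "C = 0")
    case True
    show ?thesis
    proof (rule ccontr)
      assume "\<not> N \<le> A * C"
      then have "N > 0" using True by simp
      have "0 \<le> A - 2*((A+1)/(2*N))*N" using key[of "(A+1)/(2*N)"] True by simp
      also have "\<dots> = -1" using \<open>N > 0\<close> by (simp add: field_simps)
      finally show False by simp
    qed
  next
    case False
    then have "C > 0" using C0 by simp
    have "0 \<le> A - 2*(1/C)*N + (1/C)^2*N*C" by (rule key)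
    also have "\<dots> = (A*C - N)/C" using \<open>C > 0\<close> by (simp add: field_simps power2_eq_square)
    finally show ?thesis using \<open>C > 0\<close> by (simp add: zero_le_divide_iff)
  qed
  then show ?thesis by (simp add: N_def A_def C_def \<alpha>_def)
qed



lemma cn: "z * cnj z = (complex_of_real (cmod z))^2"
  by (metis complex_norm_square of_real_power)

definition ip :: "complex^'d::finite \<Rightarrow> complex^'d \<Rightarrow> complex" where
  "ip u v = (\<Sum>i\<in>UNIV. cnj (u$i) * v$i)"

definition rk1 :: "complex^'d::finite \<Rightarrow> 'd cmat" where
  "rk1 v = (\<chi> i j. v$i * cnj (v$j))"

lemma qf_rk1: "qf (rk1 v) u u = of_real ((cmod (ip u v))^2)"
proof -
  have "qf (rk1 v) u u = (\<Sum>i\<in>UNIV. cnj (u$i) * v$i) * (\<Sum>j\<in>UNIV. cnj (v$j) * u$j)"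
    by (simp add: qf_def rk1_def matrix_vector_mult_def sum_product sum_distrib_left algebra_simps)
  also have "\<dots> = ip u v * cnj (ip u v)" by (simp add: ip_def mult.commute)
  finally show ?thesis by (simp add: cn)
qed

lemma ip_self: "ip v v = of_real (\<Sum>i\<in>UNIV. (cmod (v$i))^2)"
  by (simp add: ip_def cn mult.commute)

lemma trace_rk1: "trace (rk1 v) = of_real (\<Sum>i\<in>UNIV. (cmod (v$i))^2)"
  by (simp add: trace_def rk1_def cn)

lemma norm2_pos: "v \<noteq> 0 \<Longrightarrow> (\<Sum>i\<in>UNIV. (cmod (v$i))^2) > 0"
proof (rule ccontr)
  assume "v \<noteq> 0" "\<not> (\<Sum>i\<in>UNIV. (cmod (v$i))^2) > 0"
  moreover have "(\<Sum>i\<in>UNIV. (cmod (v$i))^2) \<ge> 0" by (simp add: sum_nonneg)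
  ultimately have "(\<Sum>i\<in>UNIV. (cmod (v$i))^2) = 0" by linarith
  then have "\<forall>i. (cmod (v$i))^2 = 0" by (simp add: sum_nonneg_eq_0_iff)
  then have "v = 0" by (simp add: vec_eq_iff)
  with \<open>v \<noteq> 0\<close> show False ..
qed

lemma psd_add: "psd A \<Longrightarrow> psd B \<Longrightarrow> psd (A + B)"
  by (simp add: psd_qf qf_madd)

lemma psd_scale: "psd A \<Longrightarrow> c \<ge> 0 \<Longrightarrow> psd (c *\<^sub>R A)"
  by (simp add: psd_qf qf_mscale)

lemma psd_zero: "psd 0"
  by (simp add: psd_qf)

lemma psd_sum: "finite S \<Longrightarrow> (\<And>a. a \<in> S \<Longrightarrow> psd (M a)) \<Longrightarrow> psd (\<Sum>a\<in>S. M a)"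
  by (induction S rule: finite_induct) (auto simp: psd_zero psd_add)

lemma psd_rk1: "psd (rk1 v)"
  by (simp add: psd_qf qf_rk1)

lemma key_psd:
  assumes "psd M" "M *v w = v" "v \<noteq> 0"
  shows "Re (qf M w w) > 0"
    and "\<And>t. 0 \<le> t \<Longrightarrow> t * Re (qf M w w) \<le> 1 \<Longrightarrow> psd (M - t *\<^sub>R rk1 v)"
proof -
  have ipq: "qf M u w = ip u v" for u using assms(2) by (simp add: qf_def ip_def)
  have CS: "(cmod (ip u v))^2 \<le> Re (qf M u u) * Re (qf M w w)" for u
    using psd_CS[OF assms(1), of u w] by (simp add: ipq)
  have C0: "Re (qf M w w) \<ge> 0" using assms(1) by (simp add: psd_qf)
  have "cmod (ip v v) > 0" using norm2_pos[OF assms(3)] by (simp only: ip_self norm_of_real)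
  then have "(cmod (ip v v))^2 > 0" by simp
  then show Cp: "Re (qf M w w) > 0" using CS[of v] C0
    by (metis less_eq_real_def mult_zero_right not_le)
  fix t :: real assume t: "0 \<le> t" "t * Re (qf M w w) \<le> 1"
  show "psd (M - t *\<^sub>R rk1 v)"
    unfolding psd_qf
  proof
    fix u
    have A0: "Re (qf M u u) \<ge> 0" "Im (qf M u u) = 0" using assms(1) by (auto simp: psd_qf)
    have "t * (cmod (ip u v))^2 \<le> t * (Re (qf M u u) * Re (qf M w w))"
      using CS[of u] t(1) by (rule mult_left_mono)
    also have "\<dots> = Re (qf M u u) * (t * Re (qf M w w))" by simp
    also have "\<dots> \<le> Re (qf M u u)" using A0(1) t(2) by (simp add: mult_left_le)
    finally show "Im (qf (M - t *\<^sub>R rk1 v) u u) = 0 \<and> 0 \<le> Re (qf (M - t *\<^sub>R rk1 v) u u)"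
      using A0 by (simp add: qf_mdiff qf_mscale qf_rk1)
  qed
qed


lemma qf_axis: "qf M (axis a 1) (axis b 1) = M$a$b"
proof -
  have "qf M (axis a 1) (axis b 1) = (\<Sum>i\<in>UNIV. (if i = a then (M *v axis b 1)$i else 0))"
    unfolding qf_def by (rule sum.cong) (auto simp: axis_def)
  also have "\<dots> = (M *v axis b 1)$a" by simp
  also have "\<dots> = (\<Sum>j\<in>UNIV. (if j = b then M$a$j else 0))"
    unfolding matrix_vector_mult_def vec_lambda_beta by (rule sum.cong) (auto simp: axis_def)
  finally show ?thesis by simp
qed
lemma axis_row: "(axis i 1 v* M) = row i (M::'d::finite cmat)"
proof -
  have "(axis i 1 v* M)$j = (\<Sum>k\<in>UNIV. (if k = i then M$k$j else 0))" for j
    unfolding vector_matrix_mult_def vec_lambda_beta by (rule sum.cong) (auto simp: axis_def)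
  then show ?thesis by (simp add: vec_eq_iff row_def)
qed


lemma psd_entry: "psd M \<Longrightarrow> M$b$a = cnj (M$a$b)"
  using psd_herm[of M "axis a 1" "axis b 1"] by (simp add: qf_axis)

lemma rowspan_sub: "vec.span (rows (M::'d::finite cmat)) \<subseteq> range (\<lambda>x. x v* M)"
proof (rule vec.span_minimal)
  show "rows M \<subseteq> range (\<lambda>x. x v* M)"
  proof
    fix r assume "r \<in> rows M"
    then obtain i where r: "r = row i M" by (auto simp: rows_def)
    have "r = axis i 1 v* M"
      by (simp add: r axis_row)
    then show "r \<in> range (\<lambda>x. x v* M)" by blast
  qed
  show "vec.subspace (range (\<lambda>x. x v* M))"
    unfolding vec.subspace_def
  proof (intro conjI ballI allI)
    show "0 \<in> range (\<lambda>x. x v* M)"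
      by (rule range_eqI[of _ _ 0]) (simp add: vector_matrix_mult_def vec_eq_iff)
    fix y z assume "y \<in> range (\<lambda>x. x v* M)" "z \<in> range (\<lambda>x. x v* M)"
    then obtain a b where "y = a v* M" "z = b v* M" by blast
    then have "y + z = (a + b) v* M"
      by (simp add: vector_matrix_mult_def vec_eq_iff sum.distrib algebra_simps)
    then show "y + z \<in> range (\<lambda>x. x v* M)" by blast
  next
    fix c :: complex and y assume "y \<in> range (\<lambda>x. x v* M)"
    then obtain a where "y = a v* M" by blast
    then have "c *s y = (c *s a) v* M"
      by (simp add: vector_matrix_mult_def vec_eq_iff sum_distrib_left algebra_simps)
    then show "c *s y \<in> range (\<lambda>x. x v* M)" by blast
  qed
qed

lemma rowspan_range:
  assumes "psd M" "u \<in> vec.span (rows M)"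
  shows "\<exists>w. M *v w = (\<chi> j. cnj (u$j))"
proof -
  obtain x where u: "u = x v* M" using rowspan_sub assms(2) by blast
  have "(M *v (\<chi> i. cnj (x$i)))$j = cnj (u$j)" for j
  proof -
    have "(M *v (\<chi> i. cnj (x$i)))$j = (\<Sum>i\<in>UNIV. M$j$i * cnj (x$i))"
      by (simp add: matrix_vector_mult_def)
    also have "\<dots> = (\<Sum>i\<in>UNIV. cnj (M$i$j) * cnj (x$i))"
      using psd_entry[OF assms(1), of j] by simp
    also have "\<dots> = cnj (u$j)"
      by (simp add: u vector_matrix_mult_def mult.commute)
    finally show ?thesis .
  qed
  then have "M *v (\<chi> i. cnj (x$i)) = (\<chi> j. cnj (u$j))" by (simp add: vec_eq_iff)
  then show ?thesis by blast
qed

lemma inter_dim: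
  fixes S :: "'k \<Rightarrow> ('a::field^'n) set"
  assumes "finite K" "\<forall>k\<in>K. vec.subspace (S k)"
  shows "int (vec.dim {v. \<forall>k\<in>K. v \<in> S k}) \<ge>
           (\<Sum>k\<in>K. int (vec.dim (S k))) - int (card K) * int CARD('n) + int CARD('n)"
  using assms
proof (induction K rule: finite_induct)
  case empty
  then show ?case using vec_dim_card[where 'a='a and 'n='n] by simp
next
  case (insert k K)
  define T where "T = {v. \<forall>k\<in>K. v \<in> S k}"
  have sT: "vec.subspace T"
    using insert.prems unfolding T_def vec.subspace_def by auto
  have sk: "vec.subspace (S k)" using insert.prems by auto
  have eq: "{v. \<forall>k'\<in>insert k K. v \<in> S k'} = S k \<inter> T" by (auto simp: T_def)
  have ds: "vec.dim {x + y |x y. x \<in> S k \<and> y \<in> T} + vec.dim (S k \<inter> T) = vec.dim (S k) + vec.dim T"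
    by (rule vec.dim_sums_Int[OF sk sT])
  have "vec.dim {x + y |x y. x \<in> S k \<and> y \<in> T} \<le> CARD('n)" by (rule dim_subset_UNIV_cart_gen)
  with ds have "int (vec.dim (S k \<inter> T)) \<ge> int (vec.dim (S k)) + int (vec.dim T) - int CARD('n)" by linarith
  moreover have "int (vec.dim T) \<ge> (\<Sum>k\<in>K. int (vec.dim (S k))) - int (card K) * int CARD('n) + int CARD('n)"
    using insert.IH insert.prems by (simp add: T_def)
  ultimately show ?case unfolding eq using insert.hyps by (simp add: algebra_simps)
qed

lemma dim_pos_nonzero:
  assumes "vec.dim (T::('a::field^'n) set) > 0" shows "\<exists>v\<in>T. v \<noteq> 0"
proof (rule ccontr)
  assume "\<not> ?thesis"
  then have "T \<subseteq> {0}" by auto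
  then have "vec.dim T \<le> vec.dim {0::'a^'n}" by (rule vec.dim_subset)
  moreover have "vec.dim {0::'a^'n} = 0" by simp
  ultimately show False using assms by linarith
qed



lemma finite_cfg: "finite (cfg n B)"
proof -
  have "cfg n B \<subseteq> (\<lambda>g i. if i < n then g i else 0) ` (PiE {..<n} (\<lambda>i. {..<B i}))"
  proof
    fix c assume c: "c \<in> cfg n B"
    have "c = (\<lambda>i. if i < n then restrict c {..<n} i else 0)"
      using c by (auto simp: cfg_def)
    moreover have "restrict c {..<n} \<in> PiE {..<n} (\<lambda>i. {..<B i})"
      using c by (auto simp: cfg_def)
    ultimately show "c \<in> (\<lambda>g i. if i < n then g i else 0) ` (PiE {..<n} (\<lambda>i. {..<B i}))"
      by blast
  qed
  moreover have "finite (PiE {..<n} (\<lambda>i. {..<B i}))" by (rule finite_PiE) auto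
  ultimately show ?thesis using finite_subset by blast
qed

lemma trace_scaleR: "trace (c *\<^sub>R (M::'d::finite cmat)) = of_real c * trace M"
  by (simp add: trace_def sum_distrib_left scaleR_conv_of_real[where 'a=complex])

lemma marginal_lin:
  "marginal n A (\<lambda>b y. c *\<^sub>R (\<sigma> b y - e *\<^sub>R \<tau> b y)) I a x =
     c *\<^sub>R (marginal n A \<sigma> I a x - e *\<^sub>R marginal n A \<tau> I a x)"
  by (simp add: marginal_def scaleR_sum_right sum_subtractf scaleR_right_diff_distrib)



theorem lemma3:
  fixes n :: nat and A X :: "nat \<Rightarrow> nat" and \<sigma> :: "'d::finite assemblage"
  assumes "n \<ge> 1" and "\<forall>i<n. A i \<ge> 1" and "\<forall>i<n. X i \<ge> 1"
    and "no_signaling n A X \<sigma>"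
    and "\<exists>f. det_box n A X f \<and>
           real (\<Sum>(a, x)\<in>I_L n A X f. rank (\<sigma> a x))
             > (real (card (I_L n A X f)) - 1) * real CARD('d)"
  shows "\<not> on_edge n A X \<sigma>"
proof -
  obtain f where fdet: "det_box n A X f" and
    hyp: "real (\<Sum>(a, x)\<in>I_L n A X f. rank (\<sigma> a x)) > (real (card (I_L n A X f)) - 1) * real CARD('d)"
    using assms(5) by blast
  define K where "K = I_L n A X f"
  have NS: "\<forall>a\<in>cfg n A. \<forall>x\<in>cfg n X. psd (\<sigma> a x)"
    "\<exists>\<rho>. density \<rho> \<and> (\<forall>x\<in>cfg n X. (\<Sum>a\<in>cfg n A. \<sigma> a x) = \<rho>)"
    "\<forall>I. I \<subseteq> {0..<n} \<and> 1 \<le> card I \<and> card I < n \<longrightarrow>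
        (\<forall>a\<in>cfg n A. \<forall>a'\<in>cfg n A. \<forall>x\<in>cfg n X. \<forall>x'\<in>cfg n X.
           (\<forall>i\<in>I. a i = a' i \<and> x i = x' i) \<longrightarrow>
           marginal n A \<sigma> I a x = marginal n A \<sigma> I a' x')"
    using assms(4) unfolding no_signaling_def by blast+
  obtain \<rho>B where \<rho>B: "density \<rho>B" "\<forall>x\<in>cfg n X. (\<Sum>a\<in>cfg n A. \<sigma> a x) = \<rho>B"
    using NS(2) by blast
  have Ksub: "K \<subseteq> cfg n A \<times> cfg n X" by (auto simp: K_def I_L_def)
  have finK: "finite K" using Ksub finite_cfg by (meson finite_SigmaI finite_subset)
  have psdK: "psd (\<sigma> (fst k) (snd k))" if "k \<in> K" for k
    using Ksub that NS(1) by auto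
  \<comment> \<open>Step 1: common nonzero vector in all row spaces\<close>
  define S where "S k = vec.span (rows (\<sigma> (fst k) (snd k)))" for k
  have subS: "\<forall>k\<in>K. vec.subspace (S k)" by (simp add: S_def vec.subspace_span)
  have dimS: "vec.dim (S k) = rank (\<sigma> (fst k) (snd k))" for k
    by (simp add: S_def row_rank_def_gen)
  have ID: "int (vec.dim {v. \<forall>k\<in>K. v \<in> S k}) \<ge>
           (\<Sum>k\<in>K. int (rank (\<sigma> (fst k) (snd k)))) - int (card K) * int CARD('d) + int CARD('d)"
    using inter_dim[OF finK subS] by (simp add: dimS)
  have sumeq: "(\<Sum>(a, x)\<in>K. rank (\<sigma> a x)) = (\<Sum>k\<in>K. rank (\<sigma> (fst k) (snd k)))"
    by (simp add: split_beta)
  have "real (\<Sum>k\<in>K. rank (\<sigma> (fst k) (snd k))) > (real (card K) - 1) * real CARD('d)"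
    using hyp unfolding K_def[symmetric] sumeq .
  then have "real_of_int ((\<Sum>k\<in>K. int (rank (\<sigma> (fst k) (snd k)))) - int (card K) * int CARD('d) + int CARD('d)) > 0"
    by (simp add: algebra_simps)
  then have "int (vec.dim {v. \<forall>k\<in>K. v \<in> S k}) > 0" using ID by linarith
  then obtain u where u: "\<forall>k\<in>K. u \<in> S k" "u \<noteq> 0"
    using dim_pos_nonzero[of "{v. \<forall>k\<in>K. v \<in> S k}"] by auto
  define v where "v = (\<chi> j. cnj (u$j))"
  have v0: "v \<noteq> 0"
  proof
    assume "v = 0"
    then have "u = 0" by (simp add: v_def vec_eq_iff)
    with u(2) show False ..
  qed
  have "\<forall>k\<in>K. \<exists>w. \<sigma> (fst k) (snd k) *v w = v"
    using rowspan_range psdK u(1) unfolding S_def v_def by blast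
  then obtain W where W: "\<And>k. k \<in> K \<Longrightarrow> \<sigma> (fst k) (snd k) *v W k = v" by metis
  define C where "C k = Re (qf (\<sigma> (fst k) (snd k)) (W k) (W k))" for k
  have Cpos: "C k > 0" if "k \<in> K" for k
    using key_psd(1)[OF psdK[OF that] W[OF that] v0] by (simp add: C_def)
  have Cpsd: "psd (\<sigma> (fst k) (snd k) - t *\<^sub>R rk1 v)" if "k \<in> K" "0 \<le> t" "t * C k \<le> 1" for k t
    using key_psd(2)[OF psdK[OF that(1)] W[OF that(1)] v0] that by (simp add: C_def)
  define \<tau> where "\<tau> = (\<Sum>i\<in>UNIV. (cmod (v$i))^2)"
  have \<tau>0: "\<tau> > 0" using norm2_pos[OF v0] by (simp add: \<tau>_def)
  define \<rho> where "\<rho> = (1/\<tau>) *\<^sub>R rk1 v"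
  have \<rho>dens: "density \<rho>"
    using \<tau>0 by (simp add: density_def \<rho>_def psd_scale psd_rk1 trace_scaleR trace_rk1 \<tau>_def[symmetric])
  define \<Sigma>C where "\<Sigma>C = (\<Sum>k\<in>K. C k)"
  have \<Sigma>C0: "\<Sigma>C \<ge> 0" unfolding \<Sigma>C_def by (rule sum_nonneg) (use Cpos in \<open>auto intro: less_imp_le\<close>)
  define \<epsilon> where "\<epsilon> = \<tau> / (2*\<tau> + \<Sigma>C)"
  have \<epsilon>0: "\<epsilon> > 0" and \<epsilon>1: "\<epsilon> < 1" using \<tau>0 \<Sigma>C0 by (auto simp: \<epsilon>_def field_simps)
  have psd\<epsilon>: "psd (\<sigma> (fst k) (snd k) - \<epsilon> *\<^sub>R \<rho>)" if "k \<in> K" for k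
  proof -
    have "C k \<le> \<Sigma>C" unfolding \<Sigma>C_def
      by (rule member_le_sum) (use Cpos that finK in \<open>auto intro: less_imp_le\<close>)
    have ee: "\<epsilon>/\<tau> = 1/(2*\<tau> + \<Sigma>C)" using \<tau>0 by (simp add: \<epsilon>_def)
    have D: "2*\<tau> + \<Sigma>C > 0" using \<tau>0 \<Sigma>C0 by simp
    have "C k / (2*\<tau> + \<Sigma>C) \<le> 1" using D \<open>C k \<le> \<Sigma>C\<close> \<tau>0 by (simp add: pos_divide_le_eq)
    then have "(\<epsilon>/\<tau>) * C k \<le> 1" unfolding ee by simp
    then have "psd (\<sigma> (fst k) (snd k) - (\<epsilon>/\<tau>) *\<^sub>R rk1 v)"
      using Cpsd[OF that] \<epsilon>0 \<tau>0 by simp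
    then show ?thesis by (simp add: \<rho>_def)
  qed
  define bs where "bs x = (\<lambda>i. if i < n then f i (x i) else 0)" for x :: "nat \<Rightarrow> nat"
  have bs_cfg: "bs x \<in> cfg n A" if "x \<in> cfg n X" for x
    using that fdet by (auto simp: bs_def cfg_def det_box_def)
  have pL: "p_L n f a x = (if a = bs x then 1 else 0)" if "a \<in> cfg n A" for a x
  proof (cases "a = bs x")
    case True
    then show ?thesis by (simp add: p_L_def bs_def)
  next
    case False
    then obtain i where i: "a i \<noteq> bs x i" by auto
    have "i < n"
    proof (rule ccontr)
      assume "\<not> i < n"
      then show False using i that by (simp add: bs_def cfg_def)
    qed
    then have "a i \<noteq> f i (x i)" using i by (simp add: bs_def)
    then have "(\<Prod>i<n. if a i = f i (x i) then 1 else (0::real)) = 0"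
      using \<open>i < n\<close> by (intro prod_zero) auto
    then show ?thesis using False by (simp add: p_L_def)
  qed
  have bsK: "(bs x, x) \<in> K" if "x \<in> cfg n X" for x
    using pL[OF bs_cfg[OF that], of x] bs_cfg[OF that] that by (simp add: K_def I_L_def)
  define \<sigma>1 :: "'d assemblage" where "\<sigma>1 a x = (if a = bs x then \<rho> else 0)" for a x
  define \<sigma>2 :: "'d assemblage" where "\<sigma>2 a x = (1/(1-\<epsilon>)) *\<^sub>R (\<sigma> a x - \<epsilon> *\<^sub>R \<sigma>1 a x)" for a x
  have LHS1: "LHS n A X \<sigma>1"
    unfolding LHS_def
  proof (intro exI conjI)
    show "\<forall>j<Suc 0. (1::real) \<ge> 0" by simp
    show "(\<Sum>j<Suc 0. (1::real)) = 1" by simp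
    show "\<forall>j<Suc 0. density \<rho>" using \<rho>dens by simp
    show "\<forall>j<Suc 0. \<forall>i<n. \<forall>x<X i. (\<forall>a<A i. (if a = f i x then 1 else (0::real)) \<ge> 0) \<and>
             (\<Sum>a<A i. (if a = f i x then 1 else (0::real))) = 1"
      using fdet by (simp add: det_box_def)
    show "\<forall>a\<in>cfg n A. \<forall>x\<in>cfg n X. \<sigma>1 a x =
            (\<Sum>j<Suc 0. (1 * (\<Prod>i<n. (\<lambda>j i a x. if a = f i x then 1 else (0::real)) j i (a i) (x i))) *\<^sub>R \<rho>)"
      using pL by (simp add: \<sigma>1_def p_L_def)
  qed
  have \<sigma>1sum: "(\<Sum>a\<in>cfg n A. \<sigma>1 a x) = \<rho>" if "x \<in> cfg n X" for x
    using bs_cfg[OF that] finite_cfg by (simp add: \<sigma>1_def sum.delta')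
  define \<rho>2 where "\<rho>2 = (1/(1-\<epsilon>)) *\<^sub>R (\<rho>B - \<epsilon> *\<^sub>R \<rho>)"
  have \<sigma>2sum: "(\<Sum>a\<in>cfg n A. \<sigma>2 a x) = \<rho>2" if "x \<in> cfg n X" for x
    using \<sigma>1sum[OF that] \<rho>B(2) that
    by (simp add: \<sigma>2_def \<rho>2_def scaleR_sum_right[symmetric] sum_subtractf scaleR_sum_right)
  have psd2: "psd (\<sigma>2 a x)" if "a \<in> cfg n A" "x \<in> cfg n X" for a x
  proof (cases "a = bs x")
    case True
    then have "psd (\<sigma> a x - \<epsilon> *\<^sub>R \<rho>)" using psd\<epsilon>[OF bsK[OF that(2)]] by simp
    then show ?thesis using True \<epsilon>1 by (simp add: \<sigma>2_def \<sigma>1_def psd_scale)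
  next
    case False
    then show ?thesis using NS(1) that \<epsilon>1 by (simp add: \<sigma>2_def \<sigma>1_def psd_scale)
  qed
  have x0: "(\<lambda>_. 0) \<in> cfg n X" using assms(3) by (auto simp: cfg_def)
  have \<rho>2dens: "density \<rho>2"
  proof -
    have "psd \<rho>2" using \<sigma>2sum[OF x0] psd_sum[of "cfg n A" "\<lambda>a. \<sigma>2 a (\<lambda>_. 0)"] finite_cfg psd2 x0 by auto
    moreover have "trace \<rho>2 = 1"
      using \<rho>B(1) \<rho>dens \<epsilon>1
      by (simp add: \<rho>2_def density_def trace_scaleR trace_sub field_simps)
    ultimately show ?thesis by (simp add: density_def)
  qed
  have marg2: "marginal n A \<sigma>2 I a x = (1/(1-\<epsilon>)) *\<^sub>R (marginal n A \<sigma> I a x -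
                  \<epsilon> *\<^sub>R (if \<forall>i\<in>I. f i (x i) = a i then \<rho> else 0))"
    if "I \<subseteq> {0..<n}" "x \<in> cfg n X" for I a x
  proof -
    have "marginal n A \<sigma>2 I a x = (1/(1-\<epsilon>)) *\<^sub>R (marginal n A \<sigma> I a x - \<epsilon> *\<^sub>R marginal n A \<sigma>1 I a x)"
      unfolding \<sigma>2_def by (rule marginal_lin)
    moreover have "marginal n A \<sigma>1 I a x = (if \<forall>i\<in>I. f i (x i) = a i then \<rho> else 0)"
    proof -
      have fin: "finite {b\<in>cfg n A. \<forall>i\<in>I. b i = a i}" using finite_cfg by simp
      have "(bs x \<in> {b\<in>cfg n A. \<forall>i\<in>I. b i = a i}) = (\<forall>i\<in>I. f i (x i) = a i)"
        using bs_cfg[OF that(2)] that(1) by (auto simp: bs_def)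
      then show ?thesis using fin by (simp add: marginal_def \<sigma>1_def sum.delta')
    qed
    ultimately show ?thesis by simp
  qed
  have NS2: "no_signaling n A X \<sigma>2"
    unfolding no_signaling_def
  proof (intro conjI)
    show "\<forall>a\<in>cfg n A. \<forall>x\<in>cfg n X. psd (\<sigma>2 a x)" using psd2 by blast
    show "\<exists>\<rho>. density \<rho> \<and> (\<forall>x\<in>cfg n X. (\<Sum>a\<in>cfg n A. \<sigma>2 a x) = \<rho>)"
      using \<rho>2dens \<sigma>2sum by blast
    show "\<forall>I. I \<subseteq> {0..<n} \<and> 1 \<le> card I \<and> card I < n \<longrightarrow>
        (\<forall>a\<in>cfg n A. \<forall>a'\<in>cfg n A. \<forall>x\<in>cfg n X. \<forall>x'\<in>cfg n X.
           (\<forall>i\<in>I. a i = a' i \<and> x i = x' i) \<longrightarrow>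
           marginal n A \<sigma>2 I a x = marginal n A \<sigma>2 I a' x')"
    proof (intro allI impI ballI)
      fix I a a' x x'
      assume I: "I \<subseteq> {0..<n} \<and> 1 \<le> card I \<and> card I < n"
        and a: "a \<in> cfg n A" "a' \<in> cfg n A" and x: "x \<in> cfg n X" "x' \<in> cfg n X"
        and ag: "\<forall>i\<in>I. a i = a' i \<and> x i = x' i"
      have m: "marginal n A \<sigma> I a x = marginal n A \<sigma> I a' x'"
        using NS(3) I a x ag by blast
      have c: "(\<forall>i\<in>I. f i (x i) = a i) = (\<forall>i\<in>I. f i (x' i) = a' i)" using ag by auto
      show "marginal n A \<sigma>2 I a x = marginal n A \<sigma>2 I a' x'"
        using marg2[of I x a] marg2[of I x' a'] I x m c by simp
    qed
  qed
  have dec: "\<forall>a\<in>cfg n A. \<forall>x\<in>cfg n X. \<sigma> a x = \<epsilon> *\<^sub>R \<sigma>1 a x + (1 - \<epsilon>) *\<^sub>R \<sigma>2 a x"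
    using \<epsilon>1 by (simp add: \<sigma>2_def)
  show ?thesis
    unfolding on_edge_def using \<epsilon>0 \<epsilon>1 LHS1 NS2 dec
    by (metis less_eq_real_def less_irrefl)
qed

end
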